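(* Let $P\ge 2$ and let $X=WH$ with $W=(w_{mp})\in\mathbb{H}_{\mathcal S}^{M\times P}$ and $H=(h_{pn})\in\mathbb{R}_+^{P\times N}$, such that $\mathrm{Re}\,w_{mp}>0$ for all $m,p$. If the QNMF $X=WH$ is essentially unique, then: (A1) for every pair $(p,q)$ with $p\neq q$ there exists $m$ such that $\Phi_{mp}=1$ and $\Phi_{mq}\boldsymbol\mu_{mq}\neq\boldsymbol\mu_{mp}$; (A2) for every pair $(p,q)$ with $p\neq q$ there exists $n$ such that $h_{pn}=0$ and $h_{qn}>0$.
   Context: $\mathbb{H}$ denotes the quaternions; for $q=a+b\mathbf i+c\mathbf j+d\mathbf k$, $\mathrm{Re}\,q=a$, $\mathrm{Im}\,q=b\mathbf i+c\mathbf j+d\mathbf k$, $|\mathrm{Im}\,q|^2=b^2+c^2+d^2$. $\mathbb{H}_{\mathcal S}=\{q\in\mathbb{H}: \mathrm{Re}\,q\ge 0,\ |\mathrm{Im}\,q|^2\le(\mathrm{Re}\,q)^2\}$; $\mathbb{R}_+=[0,\infty)$. Polar parametrization: every $w\in\mathbb{H}_{\mathcal S}$ with $\mathrm{Re}\,w>0$ is written $w=I+I\Phi\boldsymbol\mu$ with intensity $I=\mathrm{Re}\,w>0$, degree of polarization $\Phi=|\mathrm{Im}\,w|/\mathrm{Re}\,w\in[0,1]$, and polarization axis $\boldsymbol\mu$ a pure unit quaternion, with $\boldsymbol\mu=\mathrm{Im}\,w/|\mathrm{Im}\,w|$ when $\mathrm{Im}\,w\ne0$ (arbitrary otherwise).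 For the entries of $W$ we write $w_{mp}=I_{mp}+I_{mp}\Phi_{mp}\boldsymbol\mu_{mp}$. The QNMF $X=WH$ is essentially unique if for every $\tilde W\in\mathbb{H}_{\mathcal S}^{M\times P}$, $\tilde H\in\mathbb{R}_+^{P\times N}$ with $X=\tilde W\tilde H$ there exist a diagonal matrix $D$ with strictly positive diagonal entries and a permutation matrix $\Pi$ such that $\tilde W=WD\Pi$ and $\tilde H=(D\Pi)^{-1}H$. *)

theory Defs
  imports "HOL-Analysis.Analysis"
begin

text \<open>Quaternions q = a + b i + c j + d k are represented as pairs (a, (b,c,d)) of the real
part and the imaginary part, the latter viewed as a vector of real^3 (a pure quaternion).
Only the real vector space structure of the quaternions is needed here (H is real).\<close>

type_synonym quat = "real \<times> (real^3)"

definition qRe :: "quat \<Rightarrow> real" where "qRe q = fst q"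
definition qIm :: "quat \<Rightarrow> real^3" where "qIm q = snd q"

definition HS :: "quat set" where
  "HS = {q. qRe q \<ge> 0 \<and> (norm (qIm q))\<^sup>2 \<le> (qRe q)\<^sup>2}"

text \<open>The axis is Im w / |Im w| when Im w is nonzero (sgn gives 0 otherwise; the axis is
arbitrary in that case and only enters multiplied by Phi = 0).\<close>
definition intensity :: "quat \<Rightarrow> real" where "intensity w = qRe w"
definition Phi :: "quat \<Rightarrow> real" where "Phi w = norm (qIm w) / qRe w"
definition mu :: "quat \<Rightarrow> real^3" where "mu w = sgn (qIm w)"

definition qmatmul :: "('m \<Rightarrow> 'p::finite \<Rightarrow> quat) \<Rightarrow> ('p \<Rightarrow> 'n \<Rightarrow> real) \<Rightarrow> 'm \<Rightarrow> 'n \<Rightarrow> quat" where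
  "qmatmul W H m n = (\<Sum>p\<in>UNIV. H p n *\<^sub>R W m p)"

text \<open>Essential uniqueness: W~ = W D Pi and H~ = (D Pi)^-1 H, with D positive diagonal and
Pi the permutation matrix with Pi(p,j) = 1 iff p = tau j; written out entrywise.\<close>
definition essentially_unique :: "('m \<Rightarrow> 'p::finite \<Rightarrow> quat) \<Rightarrow> ('p \<Rightarrow> 'n \<Rightarrow> real) \<Rightarrow> bool" where
  "essentially_unique W H \<longleftrightarrow>
     (\<forall>W' H'. (\<forall>m p. W' m p \<in> HS) \<longrightarrow> (\<forall>p n. H' p n \<ge> 0) \<longrightarrow>
        qmatmul W' H' = qmatmul W H \<longrightarrow>
        (\<exists>d :: 'p \<Rightarrow> real. \<exists>\<tau> :: 'p \<Rightarrow> 'p. (\<forall>p. d p > 0) \<and> bij \<tau> \<and>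
           (\<forall>m j. W' m j = d (\<tau> j) *\<^sub>R W m (\<tau> j)) \<and>
           (\<forall>j n. H' j n = H (\<tau> j) n / d (\<tau> j))))"

end

theory Submission
  imports Defs
begin

lemma HS_iff: "x \<in> HS \<longleftrightarrow> 0 \<le> qRe x \<and> norm (qIm x) \<le> qRe x"
proof -
  have "0 \<le> qRe x \<Longrightarrow> (norm (qIm x))\<^sup>2 \<le> (qRe x)\<^sup>2 \<longleftrightarrow> norm (qIm x) \<le> qRe x"
    by (metis norm_ge_zero power2_le_imp_le power_mono)
  then show ?thesis unfolding HS_def by auto
qed

lemma qRe_add[simp]: "qRe (x + y) = qRe x + qRe y" by (simp add: qRe_def)
lemma qIm_add[simp]: "qIm (x + y) = qIm x + qIm y" by (simp add: qIm_def)
lemma qRe_diff[simp]: "qRe (x - y) = qRe x - qRe y" by (simp add: qRe_def)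
lemma qIm_diff[simp]: "qIm (x - y) = qIm x - qIm y" by (simp add: qIm_def)
lemma qRe_scaleR[simp]: "qRe (a *\<^sub>R x) = a * qRe x" by (simp add: qRe_def)
lemma qIm_scaleR[simp]: "qIm (a *\<^sub>R x) = a *\<^sub>R qIm x" by (simp add: qIm_def)

lemma HS_add: "x \<in> HS \<Longrightarrow> y \<in> HS \<Longrightarrow> x + y \<in> HS"
  unfolding HS_iff using norm_triangle_ineq[of "qIm x" "qIm y"] by auto

lemma HS_scale: "x \<in> HS \<Longrightarrow> a \<ge> 0 \<Longrightarrow> a *\<^sub>R x \<in> HS"
  unfolding HS_iff by (auto intro: mult_left_mono)

lemma key:
  fixes W W' :: "'m \<Rightarrow> 'p::finite \<Rightarrow> quat" and H H' :: "'p \<Rightarrow> 'n \<Rightarrow> real"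
  assumes EU: "essentially_unique W H"
    and W': "\<forall>m p. W' m p \<in> HS" and H': "\<forall>p n. H' p n \<ge> 0"
    and eq: "qmatmul W' H' = qmatmul W H"
  shows "\<exists>k a. a > 0 \<and> (\<forall>m. W' m j = a *\<^sub>R W m k) \<and>
            (\<lambda>m n. H' j n *\<^sub>R W' m j) = (\<lambda>m n. H k n *\<^sub>R W m k)"
proof -
  have ex: "\<exists>d \<tau>. (\<forall>p. d p > 0) \<and> bij \<tau> \<and>
           (\<forall>m j. W' m j = d (\<tau> j) *\<^sub>R W m (\<tau> j)) \<and>
           (\<forall>j n. H' j n = H (\<tau> j) n / d (\<tau> j))"
  proof -
    have imp: "(\<forall>m p. W' m p \<in> HS) \<longrightarrow> (\<forall>p n. H' p n \<ge> 0) \<longrightarrow>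
        qmatmul W' H' = qmatmul W H \<longrightarrow>
        (\<exists>d :: 'p \<Rightarrow> real. \<exists>\<tau> :: 'p \<Rightarrow> 'p. (\<forall>p. d p > 0) \<and> bij \<tau> \<and>
           (\<forall>m j. W' m j = d (\<tau> j) *\<^sub>R W m (\<tau> j)) \<and>
           (\<forall>j n. H' j n = H (\<tau> j) n / d (\<tau> j)))"
      using EU unfolding essentially_unique_def by (rule spec[of _ H', OF spec[of _ W']])
    show ?thesis using mp[OF mp[OF mp[OF imp W'] H'] eq] .
  qed
  then obtain d \<tau> where d: "\<forall>p. d p > 0"
    and w: "\<forall>m j. W' m j = d (\<tau> j) *\<^sub>R W m (\<tau> j)"
    and h: "\<forall>j n. H' j n = H (\<tau> j) n / d (\<tau> j)"
    by blast
  have "(\<lambda>m n. H' j n *\<^sub>R W' m j) = (\<lambda>m n. H (\<tau> j) n *\<^sub>R W m (\<tau> j))"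
    using d[rule_format, of "\<tau> j"] by (auto simp: w h)
  then show ?thesis using d w by blast
qed

lemma nat_inj_finite:
  fixes g :: "nat \<Rightarrow> 'a" and T :: "'p::finite \<Rightarrow> 'a"
  assumes "inj g" "\<forall>t. \<exists>k. g t = T k"
  shows False
proof -
  have "range g \<subseteq> range T" using assms(2) by auto
  then have "finite (range g)" by (rule finite_subset) simp
  then have "finite (UNIV :: nat set)" using assms(1) by (rule finite_imageD)
  then show False by simp
qed

lemma zero_row:
  fixes W :: "'m::finite \<Rightarrow> 'p::finite \<Rightarrow> quat" and H :: "'p \<Rightarrow> 'n::finite \<Rightarrow> real"
  assumes EU: "essentially_unique W H"
    and WH: "\<forall>m p. W m p \<in> HS" and Hp: "\<forall>p n. H p n \<ge> 0"
    and Re: "\<forall>m p. qRe (W m p) > 0"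
  shows "\<exists>n. H j n \<noteq> 0"
proof (rule ccontr)
  assume "\<not> ?thesis"
  then have z: "\<forall>n. H j n = 0" by simp
  define c :: "nat \<Rightarrow> quat" where "c t = (1, (1 / real (Suc t)) *\<^sub>R axis 1 1)" for t
  have cHS: "c t \<in> HS" for t
    unfolding HS_iff c_def qRe_def qIm_def by simp
  define W' where "W' t = (\<lambda>m i. if i = j then c t else W m i)" for t
  have "\<exists>k a. a > 0 \<and> (\<forall>m. W' t m j = a *\<^sub>R W m k)" for t
  proof -
    have "qmatmul (W' t) H = qmatmul W H"
      unfolding qmatmul_def W'_def by (intro ext sum.cong) (auto simp: z)
    moreover have "\<forall>m p. W' t m p \<in> HS" using WH cHS by (auto simp: W'_def)
    ultimately show ?thesis using key[OF EU _ Hp] by blast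
  qed
  then obtain f a where fa: "\<And>t. a t > 0 \<and> (\<forall>m. W' t m j = a t *\<^sub>R W m (f t))" by metis
  have "inj f"
  proof (rule injI)
    fix s t assume "f s = f t"
    define m0 :: 'm where "m0 = undefined"
    have cs: "c s = a s *\<^sub>R W m0 (f t)" and ct: "c t = a t *\<^sub>R W m0 (f t)"
      using fa[of s] fa[of t] \<open>f s = f t\<close> by (auto simp: W'_def)
    have "1 = a s * qRe (W m0 (f t))" "1 = a t * qRe (W m0 (f t))"
      using arg_cong[OF cs, of qRe] arg_cong[OF ct, of qRe] by (auto simp: c_def qRe_def)
    then have "a s = a t" using Re by (metis mult_right_cancel less_irrefl)
    then have "c s = c t" using cs ct by simp
    then have "1 / real (Suc s) = 1 / real (Suc t)"
      by (auto simp: c_def axis_eq_axis)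
    then show "s = t" by simp
  qed
  then show False using nat_inj_finite[of f id] by auto
qed

lemma quat_eq: "x = y \<longleftrightarrow> qRe x = qRe y \<and> qIm x = qIm y"
  by (simp add: qRe_def qIm_def prod_eq_iff)

lemma sum_two:
  fixes f f' :: "'p::finite \<Rightarrow> 'b::ab_group_add"
  assumes "p \<noteq> q" "\<And>i. i \<noteq> p \<Longrightarrow> i \<noteq> q \<Longrightarrow> f' i = f i" "f' p + f' q = f p + f q"
  shows "(\<Sum>i\<in>UNIV. f' i) = (\<Sum>i\<in>UNIV. f i)"
proof -
  have r: "(\<Sum>i\<in>UNIV. g i) = g p + (g q + (\<Sum>i\<in>UNIV - {p} - {q}. g i))" for g :: "'p \<Rightarrow> 'b"
    using assms(1) by (simp add: sum.remove[of UNIV p] sum.remove[of "UNIV - {p}" q])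
  have "(\<Sum>i\<in>UNIV - {p} - {q}. f' i) = (\<Sum>i\<in>UNIV - {p} - {q}. f i)"
    using assms(2) by (intro sum.cong) auto
  then show ?thesis unfolding r[of f] r[of f'] using assms(3)
    by (metis add.assoc)
qed

lemma phi_sgn: "(norm x / r) *\<^sub>R sgn x = (1 / r) *\<^sub>R (x :: real^3)"
  by (cases "x = 0") (auto simp: sgn_div_norm)


lemma partA2:
  fixes W :: "'m::finite \<Rightarrow> 'p::finite \<Rightarrow> quat" and H :: "'p \<Rightarrow> 'n::finite \<Rightarrow> real"
  assumes WH: "\<forall>m p. W m p \<in> HS"
    and Hp: "\<forall>p n. H p n \<ge> 0"
    and Re: "\<forall>m p. qRe (W m p) > 0"
    and EU: "essentially_unique W H"
    and pq: "p \<noteq> q"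
  shows "\<exists>n. H p n = 0 \<and> H q n > 0"
proof (rule ccontr)
  assume "\<not> ?thesis"
  then have sub: "\<And>n. H p n = 0 \<Longrightarrow> H q n = 0" using Hp by (metis less_eq_real_def)
  have "\<forall>\<^sub>F e in at_right (0::real). H p n - e * H q n \<ge> 0" for n
  proof (cases "H q n = 0")
    case True then show ?thesis using Hp by (auto intro: always_eventually)
  next
    case False
    then have hq: "H q n > 0" and hp: "H p n > 0" using Hp sub by (auto simp: less_eq_real_def)
    show ?thesis unfolding eventually_at_right_field
    proof (intro exI[of _ "H p n / H q n"] conjI allI impI)
      show "0 < H p n / H q n" using hq hp by simp
      fix y :: real assume "0 < y" "y < H p n / H q n"
      then have "y * H q n < H p n" using hq by (simp add: pos_less_divide_eq)
      then show "H p n - y * H q n \<ge> 0" by simp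
    qed
  qed
  then have "\<forall>\<^sub>F e in at_right (0::real). \<forall>n. H p n - e * H q n \<ge> 0"
    by (rule eventually_all_finite)
  then obtain \<delta> :: real where \<delta>: "\<delta> > 0" "\<And>e. 0 < e \<Longrightarrow> e < \<delta> \<Longrightarrow> \<forall>n. H p n - e * H q n \<ge> 0"
    unfolding eventually_at_right_field by auto
  define \<epsilon> where "\<epsilon> t = \<delta> / real (Suc (Suc t))" for t
  have \<epsilon>pos: "0 < \<epsilon> t" "\<epsilon> t < \<delta>" for t
    using \<delta>(1) by (auto simp: \<epsilon>_def divide_less_eq)
  define W' where "W' t = (\<lambda>m i. if i = q then W m q + \<epsilon> t *\<^sub>R W m p else W m i)" for t
  define H' where "H' t = (\<lambda>i n. if i = p then H p n - \<epsilon> t * H q n else H i n)" for t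
  define g where "g t = (\<lambda>(m::'m) n. H q n *\<^sub>R (W m q + \<epsilon> t *\<^sub>R W m p))" for t
  have "\<exists>k. g t = (\<lambda>m n. H k n *\<^sub>R W m k)" for t
  proof -
    have W'HS: "\<forall>m i. W' t m i \<in> HS"
      using WH \<epsilon>pos[of t] by (auto simp: W'_def intro!: HS_add HS_scale)
    have H'pos: "\<forall>i n. H' t i n \<ge> 0"
      using Hp \<delta>(2)[OF \<epsilon>pos[of t]] by (auto simp: H'_def)
    have "qmatmul (W' t) (H' t) = qmatmul W H"
      unfolding qmatmul_def
      by (intro ext sum_two[OF pq]) (auto simp: W'_def H'_def pq pq[symmetric] algebra_simps)
    from key[OF EU W'HS H'pos this, of q] show ?thesis
      using pq by (auto simp: g_def W'_def H'_def)
  qed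
  moreover have "inj g"
  proof (rule injI)
    fix s t assume gst: "g s = g t"
    obtain n0 where n0: "H q n0 \<noteq> 0" using zero_row[OF EU WH Hp Re] by blast
    define m0 :: 'm where "m0 = undefined"
    have "qRe (g s m0 n0) = qRe (g t m0 n0)" using gst by simp
    then have "H q n0 * (\<epsilon> s * qRe (W m0 p)) = H q n0 * (\<epsilon> t * qRe (W m0 p))"
      by (simp add: g_def algebra_simps)
    then have "\<epsilon> s * qRe (W m0 p) = \<epsilon> t * qRe (W m0 p)" using n0 by simp
    then have "\<epsilon> s = \<epsilon> t" using Re[rule_format, of m0 p] by simp
    then show "s = t" using \<delta>(1) by (simp add: \<epsilon>_def)
  qed
  ultimately show False using nat_inj_finite[of g "\<lambda>k m n. H k n *\<^sub>R W m k"] by blast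
qed


lemma HS_perturb:
  assumes a: "a \<in> HS" and b: "b \<in> HS" and Ra: "qRe a > 0" and Rb: "qRe b > 0"
    and c: "Phi a = 1 \<Longrightarrow> Phi b *\<^sub>R mu b = mu a"
  shows "\<forall>\<^sub>F e in at_right (0::real). a - e *\<^sub>R b \<in> HS"
proof (cases "Phi a = 1")
  case True
  then have na: "norm (qIm a) = qRe a" using Ra by (simp add: Phi_def)
  have sa: "sgn (qIm a) = (1 / qRe a) *\<^sub>R qIm a"
    by (simp add: sgn_div_norm na divide_inverse_commute)
  have e1: "(1 / qRe b) *\<^sub>R qIm b = (1 / qRe a) *\<^sub>R qIm a"
    using c[OF True] unfolding Phi_def mu_def phi_sgn sa .
  have "qIm b = qRe b *\<^sub>R ((1 / qRe b) *\<^sub>R qIm b)" using Rb by simp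
  also have "\<dots> = (qRe b / qRe a) *\<^sub>R qIm a" unfolding e1 by simp
  finally have imb: "qIm b = (qRe b / qRe a) *\<^sub>R qIm a" .
  define r where "r = qRe b / qRe a"
  have rpos: "r > 0" using Ra Rb by (simp add: r_def)
  have br: "b = r *\<^sub>R a" unfolding quat_eq using imb Ra by (simp add: r_def)
  show ?thesis unfolding eventually_at_right_field
  proof (intro exI[of _ "1 / r"] conjI allI impI)
    show "0 < 1 / r" using rpos by simp
    fix y :: real assume "0 < y" "y < 1 / r"
    then have "y * r < 1" using rpos by (simp add: less_divide_eq)
    then have "a - y *\<^sub>R b = (1 - y * r) *\<^sub>R a" by (simp add: br algebra_simps)
    then show "a - y *\<^sub>R b \<in> HS" using \<open>y * r < 1\<close> a by (simp add: HS_scale)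
  qed
next
  case False
  have "norm (qIm a) \<le> qRe a" using a by (simp add: HS_iff)
  moreover have "norm (qIm a) \<noteq> qRe a" using False Ra by (auto simp: Phi_def)
  ultimately have lt: "norm (qIm a) < qRe a" by simp
  have nb: "norm (qIm b) \<le> qRe b" using b by (simp add: HS_iff)
  show ?thesis unfolding eventually_at_right_field
  proof (intro exI[of _ "(qRe a - norm (qIm a)) / (2 * qRe b)"] conjI allI impI)
    show "0 < (qRe a - norm (qIm a)) / (2 * qRe b)" using lt Rb by simp
    fix y :: real assume y: "0 < y" "y < (qRe a - norm (qIm a)) / (2 * qRe b)"
    then have y2: "y * (2 * qRe b) < qRe a - norm (qIm a)" using Rb by (simp only: less_divide_eq)
    have "norm (qIm a - y *\<^sub>R qIm b) \<le> norm (qIm a) + y * norm (qIm b)"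
      using norm_triangle_ineq4[of "qIm a" "y *\<^sub>R qIm b"] y(1) by simp
    also have "\<dots> \<le> norm (qIm a) + y * qRe b" using nb y(1) by (simp add: mult_left_mono)
    finally have n1: "norm (qIm a - y *\<^sub>R qIm b) \<le> norm (qIm a) + y * qRe b" .
    have p0: "0 \<le> y * qRe b" using y(1) Rb by simp
    have y3: "norm (qIm a) + 2 * (y * qRe b) < qRe a" using y2 by (simp add: algebra_simps)
    have "0 \<le> qRe a - y * qRe b" "norm (qIm a - y *\<^sub>R qIm b) \<le> qRe a - y * qRe b"
      using n1 p0 y3 norm_ge_zero[of "qIm a"] by linarith+
    then show "a - y *\<^sub>R b \<in> HS" unfolding HS_iff by simp
  qed
qed

lemma partA1:
  fixes W :: "'m::finite \<Rightarrow> 'p::finite \<Rightarrow> quat" and H :: "'p \<Rightarrow> 'n::finite \<Rightarrow> real"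
  assumes WH: "\<forall>m p. W m p \<in> HS"
    and Hp: "\<forall>p n. H p n \<ge> 0"
    and Re: "\<forall>m p. qRe (W m p) > 0"
    and EU: "essentially_unique W H"
    and pq: "p \<noteq> q"
  shows "\<exists>m. Phi (W m p) = 1 \<and> Phi (W m q) *\<^sub>R mu (W m q) \<noteq> mu (W m p)"
proof (rule ccontr)
  assume "\<not> ?thesis"
  then have c: "\<And>m. Phi (W m p) = 1 \<Longrightarrow> Phi (W m q) *\<^sub>R mu (W m q) = mu (W m p)" by blast
  have "\<forall>\<^sub>F e in at_right (0::real). W m p - e *\<^sub>R W m q \<in> HS" for m
    using HS_perturb[OF WH[rule_format] WH[rule_format] Re[rule_format] Re[rule_format] c] by blast
  then have "\<forall>\<^sub>F e in at_right (0::real). \<forall>m. W m p - e *\<^sub>R W m q \<in> HS"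
    by (rule eventually_all_finite)
  then obtain \<delta> :: real where \<delta>: "\<delta> > 0" "\<And>e. 0 < e \<Longrightarrow> e < \<delta> \<Longrightarrow> \<forall>m. W m p - e *\<^sub>R W m q \<in> HS"
    unfolding eventually_at_right_field by auto
  define \<epsilon> where "\<epsilon> t = \<delta> / real (Suc (Suc t))" for t
  have \<epsilon>pos: "0 < \<epsilon> t" "\<epsilon> t < \<delta>" for t
    using \<delta>(1) by (auto simp: \<epsilon>_def divide_less_eq)
  define W' where "W' t = (\<lambda>m i. if i = p then W m p - \<epsilon> t *\<^sub>R W m q else W m i)" for t
  define H' where "H' t = (\<lambda>i n. if i = q then H q n + \<epsilon> t * H p n else H i n)" for t
  define g where "g t = (\<lambda>(m::'m) n. H p n *\<^sub>R (W m p - \<epsilon> t *\<^sub>R W m q))" for t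
  have "\<exists>k. g t = (\<lambda>m n. H k n *\<^sub>R W m k)" for t
  proof -
    have W'HS: "\<forall>m i. W' t m i \<in> HS"
      using WH \<delta>(2)[OF \<epsilon>pos[of t]] by (auto simp: W'_def)
    have H'pos: "\<forall>i n. H' t i n \<ge> 0"
      using Hp \<epsilon>pos[of t] by (auto simp: H'_def)
    have "qmatmul (W' t) (H' t) = qmatmul W H"
      unfolding qmatmul_def
      by (intro ext sum_two[OF pq]) (auto simp: W'_def H'_def pq pq[symmetric] algebra_simps)
    from key[OF EU W'HS H'pos this, of p] show ?thesis
      using pq by (auto simp: g_def W'_def H'_def)
  qed
  moreover have "inj g"
  proof (rule injI)
    fix s t assume gst: "g s = g t"
    obtain n0 where n0: "H p n0 \<noteq> 0" using zero_row[OF EU WH Hp Re] by blast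
    define m0 :: 'm where "m0 = undefined"
    have "qRe (g s m0 n0) = qRe (g t m0 n0)" using gst by simp
    then have "H p n0 * (\<epsilon> s * qRe (W m0 q)) = H p n0 * (\<epsilon> t * qRe (W m0 q))"
      by (simp add: g_def algebra_simps) (metis)
    then have "\<epsilon> s * qRe (W m0 q) = \<epsilon> t * qRe (W m0 q)" using n0 by simp
    then have "\<epsilon> s = \<epsilon> t" using Re[rule_format, of m0 q] by simp
    then show "s = t" using \<delta>(1) by (simp add: \<epsilon>_def)
  qed
  ultimately show False using nat_inj_finite[of g "\<lambda>k m n. H k n *\<^sub>R W m k"] by blast
qed

theorem proposition4:
  fixes W :: "'m::finite \<Rightarrow> 'p::finite \<Rightarrow> quat" and H :: "'p \<Rightarrow> 'n::finite \<Rightarrow> real"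
  assumes "CARD('p) \<ge> 2"
    and "\<forall>m p. W m p \<in> HS"
    and "\<forall>p n. H p n \<ge> 0"
    and "\<forall>m p. qRe (W m p) > 0"
    and "essentially_unique W H"
  shows "(\<forall>p q. p \<noteq> q \<longrightarrow>
            (\<exists>m. Phi (W m p) = 1 \<and> Phi (W m q) *\<^sub>R mu (W m q) \<noteq> mu (W m p)))
       \<and> (\<forall>p q. p \<noteq> q \<longrightarrow> (\<exists>n. H p n = 0 \<and> H q n > 0))"
  using partA1[OF assms(2-5)] partA2[OF assms(2-5)] by blast

end
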